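(* Let $a>0$. Every triangle in the hyperbolic plane $\mathbb{H}^2$ (of curvature $-1$) having a side of length $a$ has area at most $\min\{a,\pi\}$.
   Context: $\mathbb{H}^2$ is the hyperbolic plane of Gaussian curvature $-1$; lengths and areas are hyperbolic. *)

theory Defs
  imports "HOL-Analysis.Analysis"
begin

text \<open>The hyperbolic plane of curvature -1, realised by the Beltrami-Klein model:
  points are the complex numbers (viewed as R^2) of norm less than 1; geodesics
  are Euclidean chords, so a geodesic triangle with vertices A, B, C is the
  Euclidean convex hull of the three points.\<close>

definition hdisk :: "complex set" where
  "hdisk = {z. norm z < 1}"

definition kdist :: "complex \<Rightarrow> complex \<Rightarrow> real" where
  "kdist p q = arcosh ((1 - p \<bullet> q) / sqrt ((1 - (norm p)^2) * (1 - (norm q)^2)))"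

definition harea :: "complex set \<Rightarrow> real" where
  "harea S = integral S (\<lambda>z. 1 / (1 - (norm z)^2) powr (3/2))"

definition htriangle :: "complex \<Rightarrow> complex \<Rightarrow> complex \<Rightarrow> complex set" where
  "htriangle A B C = convex hull {A, B, C}"

end

theory Submission
  imports Defs
begin


lemma bridge:
  fixes g :: "'a::euclidean_space \<Rightarrow> 'b::euclidean_space" and h :: "'b \<Rightarrow> 'a"
    and f :: "'b \<Rightarrow> real"
  assumes hg: "\<And>x. h (g x) = x" and gh: "\<And>y. g (h y) = y"
    and contg: "\<And>x. continuous (at x) g"
    and boxg: "\<And>u v. \<exists>w z. g ` cbox u v = cbox w z"
    and boxh: "\<And>u v. \<exists>w z. h ` cbox u v = cbox w z"
    and cont: "\<And>u v. measure lborel (g ` cbox u v) = measure lborel (cbox u v)"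
    and int: "(f has_integral i) S" and bS: "bounded S"
  shows "((\<lambda>x. f (g x)) has_integral i) (h ` S)"
proof -
  obtain a b where S: "S \<subseteq> cbox a b" using bS bounded_subset_cbox_symmetric by metis
  define F where "F = (\<lambda>x. if x \<in> S then f x else 0)"
  have "(F has_integral i) (cbox a b)" unfolding F_def using S int by simp
  from has_integral_twiddle[of 1 h g, OF _ hg gh contg boxg boxh _ this] cont
  have 1: "((\<lambda>x. F (g x)) has_integral i) (h ` cbox a b)" by simp
  have 2: "F (g x) = (if x \<in> h ` S then f (g x) else 0)" for x
    unfolding F_def by (metis gh hg image_iff)
  have "h ` S \<subseteq> h ` cbox a b" using S by auto
  with 1 2 show ?thesis by simp
qed



definition toR2 :: "complex \<Rightarrow> real^2" where "toR2 z = vector [Re z, Im z]"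
definition ofR2 :: "real^2 \<Rightarrow> complex" where "ofR2 v = Complex (v$1) (v$2)"

lemma ofR2toR2[simp]: "ofR2 (toR2 z) = z" by (simp add: ofR2_def toR2_def complex_eq_iff)
lemma toR2ofR2[simp]: "toR2 (ofR2 v) = v" by (simp add: ofR2_def toR2_def vec_eq_iff forall_2)

lemma linear_r2: "linear toR2"
  by (rule linearI) (simp_all add: toR2_def vec_eq_iff forall_2)

lemma toR2_image: "toR2 ` X = ofR2 -` X"
  by (auto simp: image_iff) (metis toR2ofR2)

lemma ofR2_image: "ofR2 ` X = toR2 -` X"
  by (auto simp: image_iff) (metis ofR2toR2)

lemma toR2_box: "toR2 ` cbox u v = cbox (toR2 u) (toR2 v)"
  unfolding toR2_image
  by (auto simp: mem_box_cart forall_2 cbox_complex_eq ofR2_def toR2_def)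

lemma ofR2_box: "ofR2 ` cbox u v = cbox (ofR2 u) (ofR2 v)"
  unfolding ofR2_image
  by (auto simp: mem_box_cart forall_2 cbox_complex_eq ofR2_def toR2_def)

lemma toR2_content: "measure lborel (toR2 ` cbox u v) = measure lborel (cbox u v)"
proof -
  have e: "cbox (toR2 u) (toR2 v) = {} \<longleftrightarrow> cbox u v = {}"
    by (metis image_is_empty toR2_box)
  show ?thesis unfolding toR2_box
    using e by (simp add: content_cbox_if_cart content_cbox_if UNIV_2 Basis_complex_def toR2_def)
qed

lemma bridge_c:
  fixes f :: "complex \<Rightarrow> real"
  assumes "((\<lambda>v. f (ofR2 v)) has_integral i) S" "bounded S"
  shows "(f has_integral i) (ofR2 ` S)"
proof -
  have "continuous (at x) toR2" for x
    using linear_r2 linear_continuous_at linear_conv_bounded_linear by blast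
  from bridge[of ofR2 toR2 "\<lambda>v. f (ofR2 v)", OF _ _ this _ _ toR2_content assms]
  show ?thesis using toR2_box ofR2_box by auto
qed

definition pairV :: "real \<times> real \<Rightarrow> real^2" where "pairV p = vector [snd p, fst p]"
definition vPair :: "real^2 \<Rightarrow> real \<times> real" where "vPair v = (v$2, v$1)"

lemma vPairpairV[simp]: "vPair (pairV z) = z" by (simp add: vPair_def pairV_def)
lemma pairVvPair[simp]: "pairV (vPair v) = v" by (simp add: vPair_def pairV_def vec_eq_iff forall_2)

lemma linear_p2: "linear pairV"
  by (rule linearI) (simp_all add: pairV_def vec_eq_iff forall_2)

lemma pairV_image: "pairV ` X = vPair -` X"
  by (auto simp: image_iff) (metis pairVvPair)

lemma vPair_image: "vPair ` X = pairV -` X"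
  by (auto simp: image_iff) (metis vPairpairV)

lemma pairV_box: "pairV ` cbox u v = cbox (pairV u) (pairV v)"
  unfolding pairV_image
  by (cases u; cases v) (auto simp: mem_box_cart forall_2 cbox_Pair_eq vPair_def pairV_def)

lemma vPair_box: "vPair ` cbox u v = cbox (vPair u) (vPair v)"
  unfolding vPair_image
  by (cases "vPair u"; cases "vPair v") (auto simp: mem_box_cart forall_2 cbox_Pair_eq vPair_def pairV_def)

lemma pairV_content: "measure lborel (pairV ` cbox u v) = measure lborel (cbox u v)"
proof -
  obtain u1 u2 v1 v2 where uv: "u = (u1,u2)" "v = (v1,v2)" by (cases u; cases v)
  have e: "cbox (pairV u) (pairV v) = {} \<longleftrightarrow> cbox u v = {}"
    by (metis image_is_empty pairV_box)
  show ?thesis unfolding pairV_box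
    using e by (simp add: content_cbox_if_cart content_Pair UNIV_2 pairV_def uv cbox_Pair_eq_0)
qed

lemma fubini_sq:
  fixes \<Phi> :: "real^2 \<Rightarrow> real"
  assumes "continuous_on (cbox 0 1) \<Phi>"
  shows "integral (cbox 0 1) \<Phi> = integral {0..1} (\<lambda>s. integral {0..1} (\<lambda>r. \<Phi> (vector [r, s])))"
proof -
  have "continuous (at x) pairV" for x
    using linear_p2 linear_continuous_at linear_conv_bounded_linear by blast
  from bridge[of vPair pairV \<Phi>, OF _ _ this _ _ pairV_content integrable_integral[OF integrable_continuous[OF assms]]]
  have "((\<lambda>x. \<Phi> (pairV x)) has_integral integral (cbox 0 1) \<Phi>) (vPair ` cbox 0 1)"
    using pairV_box vPair_box by (metis bounded_cbox vPairpairV pairVvPair)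
  moreover have "vPair ` cbox 0 1 = cbox (0,0) (1,1)" unfolding vPair_box by (simp add: vPair_def)
  moreover have "continuous_on (cbox (0,0) (1,1)) (\<lambda>x. \<Phi> (pairV x))"
  proof -
    have "continuous_on (cbox (0,0) (1,1)) pairV"
      using linear_p2 linear_continuous_on linear_conv_bounded_linear by blast
    moreover have "pairV ` cbox (0,0) (1,1) = cbox 0 1"
    proof -
      have "vector [0,0] = (0::real^2)" "vector [1,1] = (1::real^2)" by (simp_all add: vec_eq_iff forall_2)
      then show ?thesis unfolding pairV_box by (simp add: pairV_def)
    qed
    ultimately show ?thesis using assms continuous_on_compose2 by blast
  qed
  ultimately show ?thesis
    using integral_prod_continuous[of 0 0 1 1 "\<lambda>x. \<Phi> (pairV x)"]
    by (simp add: integral_unique pairV_def)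
qed



definition dens :: "complex \<Rightarrow> real" where
  "dens z = 1 / (1 - (norm z)^2) powr (3/2)"

lemma harea_dens: "harea S = integral S dens"
  by (simp add: harea_def dens_def[abs_def])

definition g0 :: "complex \<Rightarrow> complex \<Rightarrow> complex \<Rightarrow> real^2 \<Rightarrow> complex" where
  "g0 A B C x = C + of_real (x$1) * (A - C + of_real (x$2) * (B - A))"

lemma vec_nth_deriv: "((\<lambda>x::real^2. x$i) has_derivative (\<lambda>v. v$i)) (at x within S)"
  using bounded_linear_vec_nth bounded_linear.has_derivative has_derivative_ident by blast

lemma tri: "g0 A B C ` cbox 0 1 = convex hull {A,B,C}"
proof
  show "g0 A B C ` cbox 0 1 \<subseteq> convex hull {A,B,C}"
  proof
    fix z assume "z \<in> g0 A B C ` cbox 0 1"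
    then obtain x where x: "x \<in> cbox 0 1" "z = g0 A B C x" by auto
    define r s where "r = x$1" and "s = x$2"
    have rs: "0 \<le> r" "r \<le> 1" "0 \<le> s" "s \<le> 1" using x(1) by (auto simp: mem_box_cart forall_2 r_def s_def)
    have "z = (r * (1-s)) *\<^sub>R A + (r * s) *\<^sub>R B + (1-r) *\<^sub>R C"
      unfolding x g0_def r_def[symmetric] s_def[symmetric]
      by (simp add: complex_eq_iff algebra_simps scaleR_conv_of_real)
    moreover have "0 \<le> r * (1-s)" "0 \<le> r * s" "0 \<le> 1-r" using rs by auto
    moreover have "r * (1-s) + r * s + (1-r) = 1" by (simp add: algebra_simps)
    ultimately have "\<exists>u v w. z = u *\<^sub>R A + v *\<^sub>R B + w *\<^sub>R C \<and> 0 \<le> u \<and> 0 \<le> v \<and> 0 \<le> w \<and> u + v + w = 1"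
      by blast
    then show "z \<in> convex hull {A,B,C}" unfolding convex_hull_3 by blast
  qed
next
  show "convex hull {A,B,C} \<subseteq> g0 A B C ` cbox 0 1"
  proof
    fix z assume "z \<in> convex hull {A,B,C}"
    then obtain u v w where uvw: "0 \<le> u" "0 \<le> v" "0 \<le> w" "u+v+w=1"
      "z = u *\<^sub>R A + v *\<^sub>R B + w *\<^sub>R C" unfolding convex_hull_3 by auto
    define r where "r = u + v"
    define s where "s = (if r = 0 then 0 else v / r)"
    define x :: "real^2" where "x = vector [r, s]"
    have "x \<in> cbox 0 1" using uvw
      by (auto simp: mem_box_cart forall_2 x_def r_def s_def divide_simps)
    moreover have "z = g0 A B C x"
    proof (cases "r = 0")
      case True
      then have "u = 0" "v = 0" "w = 1" using uvw r_def by auto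
      then show ?thesis using uvw(5) True by (simp add: g0_def x_def s_def)
    next
      case False
      then have "w = 1 - r" "v = r * s" "u = r * (1 - s)" using uvw r_def s_def by (auto simp: field_simps)
      then have z: "z = (r * (1-s)) *\<^sub>R A + (r * s) *\<^sub>R B + (1-r) *\<^sub>R C" using uvw(5) by simp
      show ?thesis
        by (simp add: z g0_def x_def complex_eq_iff algebra_simps)
    qed
    ultimately show "z \<in> g0 A B C ` cbox 0 1" by blast
  qed
qed



lemma hdisk_ball: "hdisk = ball 0 1" by (auto simp: hdisk_def)

lemma hull_in_disk: "A \<in> hdisk \<Longrightarrow> B \<in> hdisk \<Longrightarrow> C \<in> hdisk \<Longrightarrow> convex hull {A,B,C} \<subseteq> hdisk"
  unfolding hdisk_ball by (simp add: hull_minimal convex_ball)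

lemma area_bound:
  fixes A B C :: complex
  defines "\<delta> \<equiv> Re (A - C) * Im (B - A) - Im (A - C) * Re (B - A)"
  assumes "A \<in> hdisk" "B \<in> hdisk" "C \<in> hdisk"
  shows "harea (htriangle A B C) \<le> integral {0..1} (\<lambda>s. integral {0..1}
            (\<lambda>r. \<bar>r * \<delta>\<bar> * dens (g0 A B C (vector [r, s]))))"
proof -
  let ?S = "cbox (0::real^2) 1"
  define CC U W where "CC = toR2 C" and "U = toR2 (A - C)" and "W = toR2 (B - A)"
  define G where "G x = CC + (x$1) *\<^sub>R (U + (x$2) *\<^sub>R W)" for x :: "real^2"
  define G' where "G' x = (\<lambda>v::real^2. (v$1) *\<^sub>R (U + (x$2) *\<^sub>R W) + (x$1) *\<^sub>R ((v$2) *\<^sub>R W))" for x :: "real^2"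
  have cG: "ofR2 (G x) = g0 A B C x" for x
    by (simp add: G_def CC_def U_def W_def ofR2_def toR2_def g0_def complex_eq_iff algebra_simps)
  have der: "(G has_derivative G' x) (at x within ?S)" for x
    unfolding G_def G'_def
    by (auto intro!: derivative_eq_intros vec_nth_deriv simp: algebra_simps)
  have det: "det (matrix (G' x)) = x$1 * \<delta>" for x
    by (simp add: det_2 matrix_def G'_def axis_def U_def W_def toR2_def \<delta>_def algebra_simps)
  have ind: "g0 A B C x \<in> hdisk" if "x \<in> ?S" for x
    using hull_in_disk[OF assms(2-4)] tri[of A B C] that by blast
  have pos: "1 - (norm (g0 A B C x))^2 > 0" if "x \<in> ?S" for x
  proof -
    have "norm (g0 A B C x) < 1" using ind[OF that] by (simp add: hdisk_def)
    then have "(norm (g0 A B C x))^2 < 1" by (simp add: power_less_one_iff abs_square_less_1)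
    then show ?thesis by simp
  qed
  have contg0: "continuous_on ?S (g0 A B C)"
    unfolding g0_def by (intro continuous_intros)
  have cont: "continuous_on ?S (\<lambda>x. \<bar>x$1 * \<delta>\<bar> * dens (g0 A B C x))"
    unfolding dens_def
    by (intro continuous_intros contg0) (use pos in force)+
  have intS: "(\<lambda>x. \<bar>det (matrix (G' x))\<bar> * dens (ofR2 (G x))) integrable_on ?S"
    unfolding det cG by (rule integrable_continuous[OF cont])
  have nn: "0 \<le> dens (ofR2 (G x))" for x by (simp add: dens_def)
  from integral_on_image_ubound_nonneg[of ?S "\<lambda>v. dens (ofR2 v)" G G', OF nn der intS]
  have 1: "(\<lambda>v. dens (ofR2 v)) integrable_on G ` ?S"
     and 2: "integral (G ` ?S) (\<lambda>v. dens (ofR2 v)) \<le> integral ?S (\<lambda>x. \<bar>x$1 * \<delta>\<bar> * dens (g0 A B C x))"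
    unfolding det cG by auto
  have bdd: "bounded (G ` ?S)"
    using compact_continuous_image[OF _ compact_cbox] der
    by (meson compact_imp_bounded continuous_on_eq_continuous_within has_derivative_continuous)
  from bridge_c[OF integrable_integral[OF 1] bdd]
  have "(dens has_integral integral (G ` ?S) (\<lambda>v. dens (ofR2 v))) (ofR2 ` G ` ?S)" .
  moreover have "ofR2 ` G ` ?S = convex hull {A,B,C}"
    using tri[of A B C] cG by (simp add: image_image)
  ultimately have "harea (htriangle A B C) = integral (G ` ?S) (\<lambda>v. dens (ofR2 v))"
    by (simp add: harea_dens htriangle_def integral_unique)
  also have "\<dots> \<le> integral ?S (\<lambda>x. \<bar>x$1 * \<delta>\<bar> * dens (g0 A B C x))" by (rule 2)
  also have "\<dots> = integral {0..1} (\<lambda>s. integral {0..1}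
            (\<lambda>r. \<bar>r * \<delta>\<bar> * dens (g0 A B C (vector [r, s]))))"
    by (subst fubini_sq[OF cont]) simp
  finally show ?thesis .
qed



lemma deriv_div_sqrt:
  fixes N Q :: "real \<Rightarrow> real"
  assumes "(N has_real_derivative N') (at x within S)" "(Q has_real_derivative Q') (at x within S)"
    "Q x > 0" "D \<noteq> 0"
  shows "((\<lambda>x. N x / (D * sqrt (Q x))) has_real_derivative
           (N' * Q x - N x * Q' / 2) / (D * Q x * sqrt (Q x))) (at x within S)"
proof -
  have sq: "sqrt (Q x) * sqrt (Q x) = Q x" using assms(3) by simp
  have p: "sqrt (Q x) > 0" using assms(3) by simp
  have sQ: "((\<lambda>x. sqrt (Q x)) has_real_derivative (inverse (sqrt (Q x)) / 2 * Q')) (at x within S)"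
    using DERIV_chain2[OF DERIV_real_sqrt[OF assms(3)] assms(2)] .
  have "((\<lambda>x. N x / (D * sqrt (Q x))) has_real_derivative
     (N' * (D * sqrt (Q x)) - N x * (D * (inverse (sqrt (Q x)) / 2 * Q'))) / ((D * sqrt (Q x)) * (D * sqrt (Q x)))) (at x within S)"
    using assms(4) p by (intro DERIV_divide DERIV_cmult assms(1) sQ) auto
  moreover have "(N' * (D * sqrt (Q x)) - N x * (D * (inverse (sqrt (Q x)) / 2 * Q'))) / ((D * sqrt (Q x)) * (D * sqrt (Q x)))
      = (N' * Q x - N x * Q' / 2) / (D * Q x * sqrt (Q x))"
    using assms(4) p sq by (simp add: field_simps)
  ultimately show ?thesis by simp
qed

lemma powr32: "(Q::real) > 0 \<Longrightarrow> Q powr (3/2) = Q * sqrt Q"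
proof -
  assume "Q > 0"
  have "Q powr (3/2) = Q powr (1 + 1/2)" by simp
  also have "\<dots> = Q powr 1 * Q powr (1/2)" by (rule powr_add)
  also have "\<dots> = Q * sqrt Q" using \<open>Q > 0\<close> by (simp add: powr_half_sqrt)
  finally show ?thesis .
qed

lemma inner_int:
  fixes c1 c2 u1 u2 :: real
  assumes pos: "\<And>r. r \<in> {0..1} \<Longrightarrow> (c1 + r*u1)^2 + (c2 + r*u2)^2 < 1" and nz: "u1^2 + u2^2 > 0"
  defines "c0 \<equiv> 1 - (c1^2 + c2^2)" and "\<beta> \<equiv> c1*u1 + c2*u2" and "\<gamma> \<equiv> u1^2 + u2^2"
    and "D \<equiv> (u1^2 + u2^2)*(1 - (c1^2 + c2^2)) + (c1*u1 + c2*u2)^2"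
  shows "((\<lambda>r. r / (1 - ((c1 + r*u1)^2 + (c2 + r*u2)^2)) powr (3/2)) has_integral
           ((c0 - \<beta>)/(D * sqrt (c0 - 2*\<beta> - \<gamma>)) - c0/(D * sqrt c0))) {0..1}"
proof -
  define Q where "Q r = 1 - ((c1 + r*u1)^2 + (c2 + r*u2)^2)" for r
  define R where "R r = (c0 - \<beta> * r) / (D * sqrt (Q r))" for r
  have Qpos: "Q r > 0" if "r \<in> {0..1}" for r using pos[OF that] by (simp add: Q_def)
  have c0pos: "c0 > 0" using pos[of 0] by (simp add: c0_def)
  have Dpos: "D > 0" unfolding D_def using c0pos nz unfolding c0_def
    by (simp add: add_pos_nonneg)
  have Qe: "Q r = c0 - 2*\<beta>*r - \<gamma>*r^2" for r
    by (simp add: Q_def c0_def \<beta>_def \<gamma>_def power2_eq_square algebra_simps)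
  have der: "(R has_real_derivative r / (Q r) powr (3/2)) (at r within {0..1})" if r: "r \<in> {0..1}" for r
  proof -
    have dN: "((\<lambda>r. c0 - \<beta> * r) has_real_derivative (- \<beta>)) (at r within {0..1})"
      by (auto intro!: derivative_eq_intros)
    have dQ: "(Q has_real_derivative (-2*\<beta> - 2*\<gamma>*r)) (at r within {0..1})"
      unfolding Qe[abs_def] by (auto intro!: derivative_eq_intros simp: power2_eq_square)
    from deriv_div_sqrt[OF dN dQ Qpos[OF r]] Dpos
    have "(R has_real_derivative ((- \<beta>) * Q r - (c0 - \<beta> * r) * (-2*\<beta> - 2*\<gamma>*r) / 2) / (D * Q r * sqrt (Q r))) (at r within {0..1})"
      unfolding R_def by simp
    moreover have "(- \<beta>) * Q r - (c0 - \<beta> * r) * (-2*\<beta> - 2*\<gamma>*r) / 2 = D * r"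
      unfolding Qe D_def c0_def \<beta>_def \<gamma>_def by (simp add: field_simps power2_eq_square)
    moreover have "D * r / (D * Q r * sqrt (Q r)) = r / (Q r) powr (3/2)"
      using Dpos Qpos[OF r] by (simp add: powr32)
    ultimately show ?thesis by simp
  qed
  have "((\<lambda>r. r / (Q r) powr (3/2)) has_integral (R 1 - R 0)) {0..1}"
    by (rule fundamental_theorem_of_calculus) (auto simp: has_real_derivative_iff_has_vector_derivative[symmetric] intro: der)
  moreover have "R 1 - R 0 = (c0 - \<beta>)/(D * sqrt (c0 - 2*\<beta> - \<gamma>)) - c0/(D * sqrt c0)"
    by (simp add: R_def Qe)
  ultimately show ?thesis by (simp add: Q_def)
qed



lemma cs2: "(x1::real)^2 + x2^2 < 1 \<Longrightarrow> y1^2 + y2^2 < 1 \<Longrightarrow> x1*y1 + x2*y2 < 1"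
proof -
  assume "x1^2 + x2^2 < 1" "y1^2 + y2^2 < 1"
  moreover have "0 \<le> (x1-y1)^2 + (x2-y2)^2" by simp
  ultimately show ?thesis by (simp add: power2_eq_square algebra_simps)
qed

lemma G_int:
  fixes a1 a2 w1 w2 :: real
  assumes qp: "\<And>s. s \<in> {0..1} \<Longrightarrow> (a1+s*w1)^2 + (a2+s*w2)^2 < 1"
  defines "DA \<equiv> (1-(a1^2+a2^2))*(w1^2+w2^2) + (a1*w1+a2*w2)^2"
  shows "((\<lambda>s. sqrt DA / (1 - ((a1+s*w1)^2 + (a2+s*w2)^2))) has_integral
     arcosh ((1 - (a1*(a1+w1) + a2*(a2+w2))) / sqrt ((1-(a1^2+a2^2)) * (1-((a1+w1)^2+(a2+w2)^2))))) {0..1}"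
proof -
  define cA where "cA = 1-(a1^2+a2^2)"
  define q where "q s = 1 - ((a1+s*w1)^2 + (a2+s*w2)^2)" for s
  define N where "N s = 1 - (a1*(a1+s*w1) + a2*(a2+s*w2))" for s
  define t where "t = sqrt DA"
  define M where "M s = N s + s * t" for s
  define H where "H s = ln (M s) - ln (cA * q s) / 2" for s
  have DAnn: "DA \<ge> 0" unfolding DA_def using qp[of 0] by simp
  have tt: "t * t = DA" "t \<ge> 0" using DAnn by (simp_all add: t_def)
  have cApos: "cA > 0" using qp[of 0] by (simp add: cA_def)
  have qpos: "q s > 0" if "s \<in> {0..1}" for s using qp[OF that] by (simp add: q_def)
  have Npos: "N s > 0" if "s \<in> {0..1}" for s
    using cs2[OF qp[of 0] qp[OF that]] by (simp add: N_def)
  have Mpos: "M s > 0" if "s \<in> {0..1}" for s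
    using Npos[OF that] that tt(2) by (simp add: M_def add_pos_nonneg)
  have der: "(H has_real_derivative (t / q s)) (at s within {0..1})" if s: "s \<in> {0..1}" for s
  proof -
    have dM: "(M has_real_derivative (-(a1*w1+a2*w2) + t)) (at s within {0..1})"
      unfolding M_def[abs_def] N_def by (auto intro!: derivative_eq_intros simp: algebra_simps)
    have dq: "((\<lambda>s. cA * q s) has_real_derivative (cA * (-2*(a1*w1+a2*w2) - 2*(w1^2+w2^2)* s))) (at s within {0..1})"
      unfolding q_def by (auto intro!: derivative_eq_intros simp: algebra_simps power2_eq_square)
    have l1: "((\<lambda>s. ln (M s)) has_real_derivative inverse (M s) * (-(a1*w1+a2*w2) + t)) (at s within {0..1})"
      using DERIV_chain2[OF DERIV_ln[OF Mpos[OF s]] dM] .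
    have l2: "((\<lambda>s. ln (cA * q s)) has_real_derivative inverse (cA * q s) * (cA * (-2*(a1*w1+a2*w2) - 2*(w1^2+w2^2)* s))) (at s within {0..1})"
      using DERIV_chain2[OF DERIV_ln[OF mult_pos_pos[OF cApos qpos[OF s]]] dq] .
    have "(H has_real_derivative (inverse (M s) * (-(a1*w1+a2*w2) + t) - inverse (cA * q s) * (cA * (-2*(a1*w1+a2*w2) - 2*(w1^2+w2^2)* s)) / 2)) (at s within {0..1})"
      unfolding H_def[abs_def] by (rule DERIV_diff[OF l1 DERIV_cdivide[OF l2]])
    moreover have "inverse (M s) * (-(a1*w1+a2*w2) + t) - inverse (cA * q s) * (cA * (-2*(a1*w1+a2*w2) - 2*(w1^2+w2^2)* s)) / 2
      = (-(a1*w1+a2*w2) + t) / M s - (cA * (-2*(a1*w1+a2*w2) - 2*(w1^2+w2^2)* s)) / (cA * q s) / 2"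
      by (simp add: inverse_eq_divide)
    ultimately have "(H has_real_derivative ((-(a1*w1+a2*w2) + t) / M s - (cA * (-2*(a1*w1+a2*w2) - 2*(w1^2+w2^2)* s)) / (cA * q s) / 2)) (at s within {0..1})"
      by (rule DERIV_cong)
    moreover have "(-(a1*w1+a2*w2) + t) / M s - (cA * (-2*(a1*w1+a2*w2) - 2*(w1^2+w2^2)* s)) / (cA * q s) / 2 = t / q s"
    proof -
      have hyp: "(-(a1*w1+a2*w2) + t) * q s + M s * ((a1*w1+a2*w2) + (w1^2+w2^2)* s) = t * M s"
      proof -
        have "(-(a1*w1+a2*w2) + t) * q s + M s * ((a1*w1+a2*w2) + (w1^2+w2^2)* s) - t * M s = s * (DA - t * t)"
          unfolding M_def N_def q_def DA_def by (simp add: algebra_simps power2_eq_square)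
        then show ?thesis using tt(1) by simp
      qed
      have Mq: "M s \<noteq> 0" "q s \<noteq> 0" "cA \<noteq> 0" using Mpos[OF s] qpos[OF s] cApos by auto
      have e1: "(cA * (-2*(a1*w1+a2*w2) - 2*(w1^2+w2^2)* s)) / (cA * q s) / 2 = - (((a1*w1+a2*w2) + (w1^2+w2^2)* s) / q s)"
        using Mq by (simp add: field_simps)
      have "(-(a1*w1+a2*w2) + t) / M s - (cA * (-2*(a1*w1+a2*w2) - 2*(w1^2+w2^2)* s)) / (cA * q s) / 2
          = (-(a1*w1+a2*w2) + t) / M s + ((a1*w1+a2*w2) + (w1^2+w2^2)* s) / q s"
        unfolding e1 by simp
      also have "\<dots> = ((-(a1*w1+a2*w2) + t) * q s + M s * ((a1*w1+a2*w2) + (w1^2+w2^2)* s)) / (M s * q s)"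
        using Mq by (simp add: add_divide_distrib)
      also have "\<dots> = t * M s / (M s * q s)" unfolding hyp ..
      also have "\<dots> = t / q s" using Mq by simp
      finally show ?thesis .
    qed
    ultimately show ?thesis by (rule DERIV_cong)
  qed
  have "((\<lambda>s. t / q s) has_integral (H 1 - H 0)) {0..1}"
    by (rule fundamental_theorem_of_calculus) (auto simp: has_real_derivative_iff_has_vector_derivative[symmetric] intro: der)
  moreover have "H 0 = 0" using cApos
    by (simp add: H_def M_def N_def q_def cA_def ln_mult power2_eq_square)
  moreover have "H 1 = arcosh ((1 - (a1*(a1+w1) + a2*(a2+w2))) / sqrt ((1-(a1^2+a2^2)) * (1-((a1+w1)^2+(a2+w2)^2))))"
  proof -
    define X where "X = N 1 / sqrt (cA * q 1)"
    have p1: "cA * q 1 > 0" using cApos qpos[of 1] by simp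
    have id: "N 1 * N 1 - cA * q 1 = DA"
      unfolding N_def q_def cA_def DA_def by (simp add: algebra_simps power2_eq_square)
    have X2: "X^2 - 1 = DA / (cA * q 1)"
      using p1 cApos qpos[of 1] unfolding X_def id[symmetric] by (simp add: power_divide power2_eq_square diff_divide_distrib)
    have "X > 0" using Npos[of 1] p1 by (simp add: X_def)
    moreover have "X^2 \<ge> 1"
    proof -
      have "DA / (cA * q 1) \<ge> 0" using DAnn p1 by simp
      then show ?thesis using X2 by linarith
    qed
    ultimately have X1: "X \<ge> 1"
    proof (rule_tac ccontr)
      assume "X > 0" "X^2 \<ge> 1" "\<not> X \<ge> 1"
      then have "X*X < 1*1" by (intro mult_strict_mono) auto
      then show False using \<open>X^2 \<ge> 1\<close> by (simp add: power2_eq_square)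
    qed
    have sX: "sqrt (X^2 - 1) = t / sqrt (cA * q 1)"
    proof -
      have "sqrt (X^2 - 1) = sqrt (DA / (cA * q 1))" using X2 by simp
      also have "\<dots> = t / sqrt (cA * q 1)" unfolding t_def by (rule real_sqrt_divide)
      finally show ?thesis .
    qed
    have "arcosh X = ln (X + sqrt (X^2 - 1))" using X1 by (simp add: arcosh_real_def)
    also have "X + sqrt (X^2 - 1) = M 1 / sqrt (cA * q 1)"
      unfolding sX unfolding X_def M_def by (simp add: add_divide_distrib)
    also have "ln (M 1 / sqrt (cA * q 1)) = H 1"
      using Mpos[of 1] p1 cApos qpos[of 1] by (simp add: H_def ln_div ln_sqrt)
    finally show ?thesis by (simp add: X_def N_def cA_def q_def)
  qed
  ultimately show ?thesis by (simp add: t_def q_def)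
qed



definition "Lf p1 p2 u1 u2 w1 w2 = (0::real) + (u1*w1 + u2*w2) - (p1*u2 - p2*u1)*(p1*w2 - p2*w1)"
definition "Df p1 p2 u1 u2 = (0::real) + (u1^2+u2^2) - (p1*u2 - p2*u1)^2"
definition "DAf p1 p2 w1 w2 = (0::real) + (w1^2+w2^2) - (p1*w2 - p2*w1)^2"
definition "qf p1 p2 = 1 - ((p1::real)^2 + p2^2)"
definition "Xf p1 p2 u1 u2 = qf p1 p2 + (u1*p1 + u2*p2)"

lemma I2: "(u1*w2 - u2*w1)^2 * qf p1 p2 + (Lf p1 p2 u1 u2 w1 w2)^2 = Df p1 p2 u1 u2 * DAf p1 p2 w1 w2"
  unfolding Lf_def Df_def DAf_def qf_def by (simp add: algebra_simps power2_eq_square)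

lemma I4: "(w1^2+w2^2 - ((w1*u2 - w2*u1) + (p1*w2 - p2*w1))*(p1*w2 - p2*w1)) * qf p1 p2
    - Lf p1 p2 u1 u2 w1 w2 * (-2*(p1*w1+p2*w2)) / 2 = Xf p1 p2 u1 u2 * DAf p1 p2 w1 w2"
  unfolding Lf_def Xf_def DAf_def qf_def by (simp add: field_simps power2_eq_square)

lemma E_alg:
  fixes q D DA k L N' Q' X :: real
  assumes "q > 0" "D > 0" "DA > 0" "k > 0"
    "k^2 * q + L^2 = D * DA" "N' * q - L * Q' / 2 = X * DA"
  shows "inverse (1 + (L / (k * sqrt q))^2) * ((N' * q - L * Q' / 2) / (k * q * sqrt q)) = k * X / (D * sqrt q)"
proof -
  have sq: "sqrt q * sqrt q = q" "sqrt q > 0" using assms(1) by auto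
  have "1 + (L / (k * sqrt q))^2 = (k^2 * q + L^2) / (k^2 * q)"
    using sq assms by (simp add: power_divide field_simps power2_eq_square)
  also have "\<dots> = D * DA / (k^2 * q)" using assms(5) by simp
  finally have e: "1 + (L / (k * sqrt q))^2 = D * DA / (k^2 * q)" .
  show ?thesis unfolding e assms(6)
    using sq assms by (simp add: field_simps power2_eq_square)
qed

lemma D_alt: "p1 = c1 + u1 \<Longrightarrow> p2 = c2 + u2 \<Longrightarrow>
   Df p1 p2 u1 u2 = (u1^2+u2^2)*(1 - (c1^2+c2^2)) + (c1*u1+c2*u2)^2"
  unfolding Df_def by (simp add: algebra_simps power2_eq_square)

lemma DA_alt: "DAf p1 p2 w1 w2 = qf p1 p2 * (w1^2+w2^2) + (p1*w1+p2*w2)^2"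
  unfolding DAf_def qf_def by (simp add: algebra_simps power2_eq_square)

lemma E_int:
  fixes a1 a2 w1 w2 c1 c2 :: real
  assumes qp: "\<And>s. s \<in> {0..1} \<Longrightarrow> (a1+s*w1)^2 + (a2+s*w2)^2 < 1"
    and cp: "c1^2 + c2^2 < 1"
    and dnz: "(a1-c1)*w2 - (a2-c2)*w1 \<noteq> 0"
  shows "\<exists>v. ((\<lambda>s. \<bar>(a1-c1)*w2 - (a2-c2)*w1\<bar> * Xf (a1+s*w1) (a2+s*w2) (a1+s*w1-c1) (a2+s*w2-c2) /
              (Df (a1+s*w1) (a2+s*w2) (a1+s*w1-c1) (a2+s*w2-c2) * sqrt (qf (a1+s*w1) (a2+s*w2))))
            has_integral v) {0..1} \<and> v \<le> pi"
proof -
  define k where "k = \<bar>(a1-c1)*w2 - (a2-c2)*w1\<bar>"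
  define P1 P2 U1 U2 where "P1 s = a1+s*w1" and "P2 s = a2+s*w2" and "U1 s = a1+s*w1-c1" and "U2 s = a2+s*w2-c2" for s
  define L where "L s = Lf (P1 s) (P2 s) (U1 s) (U2 s) w1 w2" for s
  define Q where "Q s = qf (P1 s) (P2 s)" for s
  define E where "E s = arctan (L s / (k * sqrt (Q s)))" for s
  have kpos: "k > 0" using dnz by (simp add: k_def)
  have wnz: "w1^2 + w2^2 > 0" using dnz
    by (metis add_pos_nonneg diff_self mult_zero_right not_less_iff_gr_or_eq power2_less_0 sum_power2_gt_zero_iff zero_less_power2)
  have Qpos: "Q s > 0" if "s \<in> {0..1}" for s using qp[OF that] by (simp add: Q_def qf_def P1_def P2_def)
  have c0: "1 - (c1^2+c2^2) > 0" using cp by simp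
  have unz: "(U1 s)^2 + (U2 s)^2 > 0" for s
  proof -
    have "U1 s * w2 - U2 s * w1 \<noteq> 0" using dnz by (simp add: U1_def U2_def algebra_simps)
    then have "U1 s \<noteq> 0 \<or> U2 s \<noteq> 0" by auto
    then show ?thesis by (simp add: sum_power2_gt_zero_iff)
  qed
  have Dpos: "Df (P1 s) (P2 s) (U1 s) (U2 s) > 0" for s
  proof -
    have "Df (P1 s) (P2 s) (U1 s) (U2 s) = ((U1 s)^2+(U2 s)^2)*(1 - (c1^2+c2^2)) + (c1*U1 s+c2*U2 s)^2"
      by (rule D_alt) (simp_all add: P1_def P2_def U1_def U2_def)
    also have "\<dots> > 0" using unz[of s] c0 by (intro add_pos_nonneg) auto
    finally show ?thesis .
  qed
  have DApos: "DAf (P1 s) (P2 s) w1 w2 > 0" if "s \<in> {0..1}" for s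
    unfolding DA_alt using Qpos[OF that] wnz unfolding Q_def by (intro add_pos_nonneg) auto
  have der: "(E has_real_derivative k * Xf (P1 s) (P2 s) (U1 s) (U2 s) / (Df (P1 s) (P2 s) (U1 s) (U2 s) * sqrt (Q s)))
      (at s within {0..1})" if s: "s \<in> {0..1}" for s
  proof -
    have dL: "(L has_real_derivative (w1^2+w2^2 - ((w1*U2 s - w2*U1 s) + (P1 s*w2 - P2 s*w1))*(P1 s*w2 - P2 s*w1))) (at s within {0..1})"
      unfolding L_def[abs_def] Lf_def P1_def P2_def U1_def U2_def
      by (auto intro!: derivative_eq_intros simp: algebra_simps power2_eq_square)
    have dQ: "(Q has_real_derivative (-2*(P1 s*w1+P2 s*w2))) (at s within {0..1})"
      unfolding Q_def[abs_def] qf_def P1_def P2_def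
      by (auto intro!: derivative_eq_intros simp: algebra_simps power2_eq_square)
    have f: "((\<lambda>s. L s / (k * sqrt (Q s))) has_real_derivative
       ((w1^2+w2^2 - ((w1*U2 s - w2*U1 s) + (P1 s*w2 - P2 s*w1))*(P1 s*w2 - P2 s*w1)) * Q s - L s * (-2*(P1 s*w1+P2 s*w2)) / 2) / (k * Q s * sqrt (Q s))) (at s within {0..1})"
      using deriv_div_sqrt[OF dL dQ Qpos[OF s]] kpos by simp
    have "(E has_real_derivative inverse (1 + (L s / (k * sqrt (Q s)))^2) *
       (((w1^2+w2^2 - ((w1*U2 s - w2*U1 s) + (P1 s*w2 - P2 s*w1))*(P1 s*w2 - P2 s*w1)) * Q s - L s * (-2*(P1 s*w1+P2 s*w2)) / 2) / (k * Q s * sqrt (Q s)))) (at s within {0..1})"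
      unfolding E_def[abs_def] by (rule DERIV_chain2[OF DERIV_arctan f])
    moreover have "inverse (1 + (L s / (k * sqrt (Q s)))^2) *
       (((w1^2+w2^2 - ((w1*U2 s - w2*U1 s) + (P1 s*w2 - P2 s*w1))*(P1 s*w2 - P2 s*w1)) * Q s - L s * (-2*(P1 s*w1+P2 s*w2)) / 2) / (k * Q s * sqrt (Q s)))
       = k * Xf (P1 s) (P2 s) (U1 s) (U2 s) / (Df (P1 s) (P2 s) (U1 s) (U2 s) * sqrt (Q s))"
    proof (rule E_alg[OF Qpos[OF s] Dpos DApos[OF s] kpos])
      have "k^2 = (U1 s * w2 - U2 s * w1)^2" unfolding k_def by (simp add: U1_def U2_def algebra_simps)
      then show "k^2 * Q s + (L s)^2 = Df (P1 s) (P2 s) (U1 s) (U2 s) * DAf (P1 s) (P2 s) w1 w2"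
        unfolding Q_def L_def using I2 by metis
      show "(w1^2+w2^2 - ((w1*U2 s - w2*U1 s) + (P1 s*w2 - P2 s*w1))*(P1 s*w2 - P2 s*w1)) * Q s - L s * (-2*(P1 s*w1+P2 s*w2)) / 2
          = Xf (P1 s) (P2 s) (U1 s) (U2 s) * DAf (P1 s) (P2 s) w1 w2"
        unfolding Q_def L_def by (rule I4)
    qed
    ultimately show ?thesis by (rule DERIV_cong)
  qed
  have "((\<lambda>s. k * Xf (P1 s) (P2 s) (U1 s) (U2 s) / (Df (P1 s) (P2 s) (U1 s) (U2 s) * sqrt (Q s))) has_integral (E 1 - E 0)) {0..1}"
    by (rule fundamental_theorem_of_calculus) (auto simp: has_real_derivative_iff_has_vector_derivative[symmetric] intro: der)
  moreover have "E 1 - E 0 \<le> pi"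
    using arctan_ubound[of "L 1 / (k * sqrt (Q 1))"] arctan_lbound[of "L 0 / (k * sqrt (Q 0))"]
    unfolding E_def by linarith
  ultimately show ?thesis unfolding k_def P1_def P2_def U1_def U2_def Q_def by blast
qed



lemma FG:
  fixes p1 p2 u1 u2 w1 w2 c1 c2 :: real
  assumes pc: "p1 = c1 + u1" "p2 = c2 + u2"
    and qpos: "qf p1 p2 > 0" and c0: "1 - (c1^2+c2^2) > 0" and Dpos: "Df p1 p2 u1 u2 > 0"
  shows "\<bar>u1*w2 - u2*w1\<bar> * (Xf p1 p2 u1 u2 / (Df p1 p2 u1 u2 * sqrt (qf p1 p2))
          - (1 - (c1^2+c2^2)) / (Df p1 p2 u1 u2 * sqrt (1 - (c1^2+c2^2))))
         \<le> sqrt (DAf p1 p2 w1 w2) / qf p1 p2"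
proof -
  define X D q c DA d where "X = Xf p1 p2 u1 u2" and "D = Df p1 p2 u1 u2" and "q = qf p1 p2"
    and "c = 1 - (c1^2+c2^2)" and "DA = DAf p1 p2 w1 w2" and "d = \<bar>u1*w2 - u2*w1\<bar>"
  have DAnn: "DA \<ge> 0" unfolding DA_def DA_alt using qpos by (intro add_nonneg_nonneg) auto
  have X2: "X^2 = D + c * q"
    unfolding X_def D_def c_def q_def Xf_def Df_def qf_def pc by (simp add: algebra_simps power2_eq_square)
  have "X \<le> \<bar>X\<bar>" by simp
  also have "\<bar>X\<bar> = sqrt (D + c * q)" using X2 by (metis real_sqrt_abs)
  also have "\<dots> \<le> sqrt D + sqrt (c * q)" using Dpos qpos c0 unfolding D_def q_def c_def
    by (intro sqrt_add_le_add_sqrt) auto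
  finally have Xle: "X - sqrt c * sqrt q \<le> sqrt D" by (simp add: real_sqrt_mult)
  have sc: "c / sqrt c = sqrt c" using c0 unfolding c_def by (simp add: real_div_sqrt)
  have sq: "sqrt q > 0" "sqrt D > 0" using qpos Dpos unfolding q_def D_def by auto
  have "X / (D * sqrt q) - c / (D * sqrt c) = (X - sqrt c * sqrt q) / (D * sqrt q)"
    using sq sc c0 unfolding c_def by (simp add: field_simps)
  also have "\<dots> \<le> sqrt D / (D * sqrt q)"
    using Xle sq Dpos unfolding D_def by (intro divide_right_mono) auto
  also have "\<dots> = 1 / (sqrt D * sqrt q)"
    using sq by (simp add: field_simps flip: D_def)
  finally have 1: "X / (D * sqrt q) - c / (D * sqrt c) \<le> 1 / (sqrt D * sqrt q)" .
  have "d^2 * q \<le> D * DA"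
    using I2[of u1 w2 u2 w1 p1 p2] unfolding d_def D_def DA_def q_def
    by (metis power2_abs le_add_same_cancel1 zero_le_power2)
  then have "sqrt (d^2 * q) \<le> sqrt (D * DA)" by simp
  then have 2: "d * sqrt q \<le> sqrt D * sqrt DA" by (simp add: real_sqrt_mult d_def)
  have "d * (X / (D * sqrt q) - c / (D * sqrt c)) \<le> d * (1 / (sqrt D * sqrt q))"
    using 1 by (intro mult_left_mono) (auto simp: d_def)
  also have "\<dots> \<le> sqrt DA / q"
  proof -
    have "d * (1 / (sqrt D * sqrt q)) = (d * sqrt q) / (sqrt D * q)"
      using sq qpos unfolding q_def by (simp add: field_simps)
    also have "\<dots> \<le> (sqrt D * sqrt DA) / (sqrt D * q)"
      using 2 sq qpos unfolding q_def by (intro divide_right_mono) auto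
    also have "\<dots> = sqrt DA / q" using sq by simp
    finally show ?thesis .
  qed
  finally show ?thesis unfolding X_def D_def q_def c_def DA_def d_def .
qed



lemma aux_mult: "(d::real) * (r / X) = (r * d) * (1 / X)" by simp

theorem lemma14:
  fixes a :: real and A B C :: complex
  assumes "a > 0"
    and "A \<in> hdisk" and "B \<in> hdisk" and "C \<in> hdisk"
    and "kdist A B = a"
  shows "harea (htriangle A B C) \<le> min a pi"
proof -
  define a1 a2 w1 w2 c1 c2 where "a1 = Re A" and "a2 = Im A" and "w1 = Re (B - A)" and "w2 = Im (B - A)"
    and "c1 = Re C" and "c2 = Im C"
  define \<delta> where "\<delta> = Re (A - C) * Im (B - A) - Im (A - C) * Re (B - A)"
  have \<delta>e: "\<delta> = (a1-c1)*w2 - (a2-c2)*w1" by (simp add: \<delta>_def a1_def a2_def w1_def w2_def c1_def c2_def)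
  define I where "I = integral {0..1} (\<lambda>s. integral {0..1} (\<lambda>r. \<bar>r * \<delta>\<bar> * dens (g0 A B C (vector [r, s]))))"
  have areaI: "harea (htriangle A B C) \<le> I"
    unfolding I_def \<delta>_def by (rule area_bound[OF assms(2-4)])
  have gnorm: "(norm (g0 A B C (vector [r, s])))^2 = (c1 + r*(a1 + s*w1 - c1))^2 + (c2 + r*(a2 + s*w2 - c2))^2" for r s
    by (simp add: g0_def cmod_power2 a1_def a2_def w1_def w2_def c1_def c2_def algebra_simps)
  have inD: "(c1 + r*(a1 + s*w1 - c1))^2 + (c2 + r*(a2 + s*w2 - c2))^2 < 1" if "r \<in> {0..1}" "s \<in> {0..1}" for r s
  proof -
    have "vector [r, s] \<in> cbox (0::real^2) 1" using that by (simp add: mem_box_cart forall_2)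
    then have "g0 A B C (vector [r, s]) \<in> hdisk"
      using hull_in_disk[OF assms(2-4)] tri[of A B C] by blast
    then have "norm (g0 A B C (vector [r, s])) < 1" by (simp add: hdisk_def)
    then have "(norm (g0 A B C (vector [r, s])))^2 < 1" by (simp add: abs_square_less_1)
    then show ?thesis unfolding gnorm .
  qed
  have qp: "(a1 + s*w1)^2 + (a2 + s*w2)^2 < 1" if "s \<in> {0..1}" for s
    using inD[OF _ that, of 1] by simp
  have cp: "c1^2 + c2^2 < 1" using inD[of 0 0] by simp
  have "I \<le> a \<and> I \<le> pi"
  proof (cases "\<delta> = 0")
    case True
    then have "I = 0" unfolding I_def by simp
    then show ?thesis using assms(1) pi_gt_zero by linarith
  next
    case False
    define F where "F s = \<bar>\<delta>\<bar> * (Xf (a1+s*w1) (a2+s*w2) (a1+s*w1-c1) (a2+s*w2-c2) /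
          (Df (a1+s*w1) (a2+s*w2) (a1+s*w1-c1) (a2+s*w2-c2) * sqrt (qf (a1+s*w1) (a2+s*w2)))
          - (1 - (c1^2+c2^2)) / (Df (a1+s*w1) (a2+s*w2) (a1+s*w1-c1) (a2+s*w2-c2) * sqrt (1 - (c1^2+c2^2))))" for s
    have c0: "1 - (c1^2+c2^2) > 0" using cp by simp
    have unz: "(a1+s*w1-c1)^2 + (a2+s*w2-c2)^2 > 0" for s
    proof -
      have "(a1+s*w1-c1) * w2 - (a2+s*w2-c2) * w1 \<noteq> 0" using False \<delta>e by (simp add: algebra_simps)
      then have "a1+s*w1-c1 \<noteq> 0 \<or> a2+s*w2-c2 \<noteq> 0" by auto
      then show ?thesis by (simp add: sum_power2_gt_zero_iff)
    qed
    have Dpos: "Df (a1+s*w1) (a2+s*w2) (a1+s*w1-c1) (a2+s*w2-c2) > 0" for s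
    proof -
      have "Df (a1+s*w1) (a2+s*w2) (a1+s*w1-c1) (a2+s*w2-c2) =
          ((a1+s*w1-c1)^2+(a2+s*w2-c2)^2)*(1 - (c1^2+c2^2)) + (c1*(a1+s*w1-c1)+c2*(a2+s*w2-c2))^2"
        by (rule D_alt) simp_all
      also have "\<dots> > 0" using unz[of s] c0 by (intro add_pos_nonneg) auto
      finally show ?thesis .
    qed
    have qpos: "qf (a1+s*w1) (a2+s*w2) > 0" if "s \<in> {0..1}" for s
      using qp[OF that] by (simp add: qf_def)
    have inner: "integral {0..1} (\<lambda>r. \<bar>r * \<delta>\<bar> * dens (g0 A B C (vector [r, s]))) = F s" if s: "s \<in> {0..1}" for s
    proof -
      have "((\<lambda>r. r / (1 - ((c1 + r*(a1 + s*w1 - c1))^2 + (c2 + r*(a2 + s*w2 - c2))^2)) powr (3/2)) has_integral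
           ((1 - (c1^2 + c2^2) - (c1*(a1 + s*w1 - c1) + c2*(a2 + s*w2 - c2))) /
             ((((a1 + s*w1 - c1)^2 + (a2 + s*w2 - c2)^2)*(1 - (c1^2 + c2^2)) + (c1*(a1 + s*w1 - c1) + c2*(a2 + s*w2 - c2))^2) *
              sqrt ((1 - (c1^2 + c2^2)) - 2*(c1*(a1 + s*w1 - c1) + c2*(a2 + s*w2 - c2)) - ((a1 + s*w1 - c1)^2 + (a2 + s*w2 - c2)^2)))
          - (1 - (c1^2 + c2^2)) / ((((a1 + s*w1 - c1)^2 + (a2 + s*w2 - c2)^2)*(1 - (c1^2 + c2^2)) + (c1*(a1 + s*w1 - c1) + c2*(a2 + s*w2 - c2))^2) * sqrt (1 - (c1^2 + c2^2))))) {0..1}"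
        by (rule inner_int[OF inD[OF _ s] unz])
      moreover have "1 - (c1^2 + c2^2) - (c1*(a1 + s*w1 - c1) + c2*(a2 + s*w2 - c2)) = Xf (a1+s*w1) (a2+s*w2) (a1+s*w1-c1) (a2+s*w2-c2)"
        by (simp add: Xf_def qf_def algebra_simps power2_eq_square)
      moreover have "(1 - (c1^2 + c2^2)) - 2*(c1*(a1 + s*w1 - c1) + c2*(a2 + s*w2 - c2)) - ((a1 + s*w1 - c1)^2 + (a2 + s*w2 - c2)^2)
          = qf (a1+s*w1) (a2+s*w2)"
        by (simp add: qf_def algebra_simps power2_eq_square)
      moreover have "((a1 + s*w1 - c1)^2 + (a2 + s*w2 - c2)^2)*(1 - (c1^2 + c2^2)) + (c1*(a1 + s*w1 - c1) + c2*(a2 + s*w2 - c2))^2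
          = Df (a1+s*w1) (a2+s*w2) (a1+s*w1-c1) (a2+s*w2-c2)"
        by (rule D_alt[symmetric]) simp_all
      ultimately have h: "((\<lambda>r. r / (1 - ((c1 + r*(a1 + s*w1 - c1))^2 + (c2 + r*(a2 + s*w2 - c2))^2)) powr (3/2)) has_integral
          F s / \<bar>\<delta>\<bar>) {0..1}"
        unfolding F_def using False by simp
      have h2: "((\<lambda>r. \<bar>\<delta>\<bar> * (r / (1 - ((c1 + r*(a1 + s*w1 - c1))^2 + (c2 + r*(a2 + s*w2 - c2))^2)) powr (3/2))) has_integral
          \<bar>\<delta>\<bar> * (F s / \<bar>\<delta>\<bar>)) {0..1}"
        by (rule has_integral_mult_right[OF h])
      have eqr: "\<bar>\<delta>\<bar> * (r / (1 - ((c1 + r*(a1 + s*w1 - c1))^2 + (c2 + r*(a2 + s*w2 - c2))^2)) powr (3/2))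
          = \<bar>r * \<delta>\<bar> * dens (g0 A B C (vector [r, s]))" if r: "r \<in> {0..1}" for r
      proof -
        have "\<bar>r * \<delta>\<bar> = r * \<bar>\<delta>\<bar>" using r by (simp add: abs_mult)
        moreover have "dens (g0 A B C (vector [r, s])) = 1 / (1 - ((c1 + r*(a1 + s*w1 - c1))^2 + (c2 + r*(a2 + s*w2 - c2))^2)) powr (3/2)"
          by (simp only: dens_def gnorm)
        ultimately show ?thesis by (subst aux_mult) (simp only:)
      qed
      have "((\<lambda>r. \<bar>r * \<delta>\<bar> * dens (g0 A B C (vector [r, s]))) has_integral \<bar>\<delta>\<bar> * (F s / \<bar>\<delta>\<bar>)) {0..1}"
        by (rule has_integral_eq[OF eqr h2])
      then have "((\<lambda>r. \<bar>r * \<delta>\<bar> * dens (g0 A B C (vector [r, s]))) has_integral F s) {0..1}"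
        using False by simp
      then show ?thesis by (rule integral_unique)
    qed
    have IF: "I = integral {0..1} F" unfolding I_def by (rule integral_cong) (use inner in auto)
    have contF: "continuous_on {0..1} F"
    proof -
      have cX: "continuous_on {0..1} (\<lambda>s. Xf (a1+s*w1) (a2+s*w2) (a1+s*w1-c1) (a2+s*w2-c2))"
        unfolding Xf_def qf_def by (intro continuous_intros)
      have cD: "continuous_on {0..1} (\<lambda>s. Df (a1+s*w1) (a2+s*w2) (a1+s*w1-c1) (a2+s*w2-c2))"
        unfolding Df_def by (intro continuous_intros)
      have cq: "continuous_on {0..1} (\<lambda>s. qf (a1+s*w1) (a2+s*w2))"
        unfolding qf_def by (intro continuous_intros)
      define Xs Ds qs where "Xs s = Xf (a1+s*w1) (a2+s*w2) (a1+s*w1-c1) (a2+s*w2-c2)"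
        and "Ds s = Df (a1+s*w1) (a2+s*w2) (a1+s*w1-c1) (a2+s*w2-c2)" and "qs s = qf (a1+s*w1) (a2+s*w2)" for s
      have Fe: "F = (\<lambda>s. \<bar>\<delta>\<bar> * (Xs s / (Ds s * sqrt (qs s)) - (1 - (c1^2+c2^2)) / (Ds s * sqrt (1 - (c1^2+c2^2)))))"
        unfolding F_def Xs_def Ds_def qs_def ..
      have cX': "continuous_on {0..1} Xs" using cX unfolding Xs_def .
      have cD': "continuous_on {0..1} Ds" using cD unfolding Ds_def .
      have cq': "continuous_on {0..1} qs" using cq unfolding qs_def .
      have nz1: "\<forall>s\<in>{0..1}. Ds s * sqrt (qs s) \<noteq> 0" using Dpos qpos unfolding Ds_def qs_def
        by (metis less_numeral_extra(3) mult_eq_0_iff real_sqrt_eq_zero_cancel_iff)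
      have nz2: "\<forall>s\<in>{0..1}. Ds s * sqrt (1 - (c1^2+c2^2)) \<noteq> 0" using Dpos c0 unfolding Ds_def
        by (metis less_numeral_extra(3) mult_eq_0_iff real_sqrt_eq_zero_cancel_iff)
      have c1': "continuous_on {0..1} (\<lambda>s. Ds s * sqrt (qs s))" by (intro continuous_on_mult cD' continuous_on_real_sqrt cq')
      have c2': "continuous_on {0..1} (\<lambda>s. Ds s * sqrt (1 - (c1^2+c2^2)))" by (intro continuous_on_mult cD' continuous_on_const)
      show ?thesis unfolding Fe
        by (intro continuous_on_mult continuous_on_const continuous_on_diff continuous_on_divide cX' c1' c2' nz1 nz2)
    qed
    have Fint: "(F has_integral integral {0..1} F) {0..1}"
      using integrable_continuous_interval[OF contF] by (simp add: integrable_integral)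
    have Gint: "((\<lambda>s. sqrt ((1-(a1^2+a2^2))*(w1^2+w2^2) + (a1*w1+a2*w2)^2) / (1 - ((a1+s*w1)^2 + (a2+s*w2)^2))) has_integral a) {0..1}"
    proof -
      have "kdist A B = arcosh ((1 - (a1*(a1+w1) + a2*(a2+w2))) / sqrt ((1-(a1^2+a2^2)) * (1-((a1+w1)^2+(a2+w2)^2))))"
        by (simp add: kdist_def inner_complex_def cmod_power2 a1_def a2_def w1_def w2_def)
      with G_int[OF qp] assms(5) show ?thesis by simp
    qed
    have FG': "F s \<le> sqrt ((1-(a1^2+a2^2))*(w1^2+w2^2) + (a1*w1+a2*w2)^2) / (1 - ((a1+s*w1)^2 + (a2+s*w2)^2))"
      if s: "s \<in> {0..1}" for s
    proof -
      have "F s \<le> sqrt (DAf (a1+s*w1) (a2+s*w2) w1 w2) / qf (a1+s*w1) (a2+s*w2)"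
      proof -
        have dd: "(a1+s*w1-c1)*w2 - (a2+s*w2-c2)*w1 = \<delta>" by (simp add: \<delta>e algebra_simps)
        show ?thesis unfolding F_def
          using FG[of "a1+s*w1" c1 "a1+s*w1-c1" "a2+s*w2" c2 "a2+s*w2-c2" w2 w1, OF _ _ qpos[OF s] c0 Dpos, unfolded dd] by simp
      qed
      moreover have "DAf (a1+s*w1) (a2+s*w2) w1 w2 = (1-(a1^2+a2^2))*(w1^2+w2^2) + (a1*w1+a2*w2)^2"
        by (simp add: DAf_def algebra_simps power2_eq_square)
      ultimately show ?thesis by (simp add: qf_def)
    qed
    have Ia: "I \<le> a" unfolding IF
      by (rule has_integral_le[OF Fint Gint]) (use FG' in auto)
    obtain v where v: "((\<lambda>s. \<bar>(a1-c1)*w2 - (a2-c2)*w1\<bar> * Xf (a1+s*w1) (a2+s*w2) (a1+s*w1-c1) (a2+s*w2-c2) /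
              (Df (a1+s*w1) (a2+s*w2) (a1+s*w1-c1) (a2+s*w2-c2) * sqrt (qf (a1+s*w1) (a2+s*w2))))
            has_integral v) {0..1}" "v \<le> pi"
      using E_int[OF qp cp] False \<delta>e by blast
    have FE: "F s \<le> \<bar>(a1-c1)*w2 - (a2-c2)*w1\<bar> * Xf (a1+s*w1) (a2+s*w2) (a1+s*w1-c1) (a2+s*w2-c2) /
              (Df (a1+s*w1) (a2+s*w2) (a1+s*w1-c1) (a2+s*w2-c2) * sqrt (qf (a1+s*w1) (a2+s*w2)))" for s
    proof -
      have "0 \<le> \<bar>\<delta>\<bar> * ((1 - (c1^2+c2^2)) / (Df (a1+s*w1) (a2+s*w2) (a1+s*w1-c1) (a2+s*w2-c2) * sqrt (1 - (c1^2+c2^2))))"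
        using c0 Dpos[of s] by (intro mult_nonneg_nonneg divide_nonneg_pos) auto
      then show ?thesis unfolding F_def \<delta>e by (simp add: right_diff_distrib)
    qed
    have "I \<le> v" unfolding IF
      by (rule has_integral_le[OF Fint v(1)]) (use FE in auto)
    with v(2) Ia show ?thesis by linarith
  qed
  with areaI show ?thesis by linarith
qed


end
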